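(* In the construction below, let $k\in\{0,\dots,K-1\}$ and let $S\subseteq X$ be a nonempty set with $\mathrm{diam}_X(S)\le 2\tau^{-k}$. If $u'\in S\cap U_{k+1}$, then $(\mathsf f_k(S),u')\in A_k$.
   Context: Construction. Let $(X,d)$ be a metric space with $n=|X|\ge2$ and $\mathrm{diam}(X)=1$. For $S\subseteq X$, $r\ge0$: $B_X(S,r):=\{x\in X:\exists s\in S,\ d(x,s)\le r\}$ and $B_X(x,r):=B_X(\{x\},r)$. Let $\varepsilon_0:=\min\{d(x,y):x\ne y\}$, $\tau:=12$, $K:=1+\lceil\log_\tau(1/\varepsilon_0)\rceil$. For $\eta>0$ the greedy $\eta$-net is built as: $N_0=\emptyset$; for $j\ge1$, $S_j:=X\setminus B_X(N_{j-1},\eta)$; if $S_j=\emptyset$ output $N_{j-1}$; else pick $x_j\in S_j$ maximizing $|B_X(x,\eta/3)|$ and set $N_j=N_{j-1}\cup\{x_j\}$. For $k=0,\dots,K$ let $U_k$ be the greedy $\tau^{-k}$-net. For $k<K$, $A_k$ is the set of pairs $(u,u')\in U_k\times U_{k+1}$ with (i) $d(u,u')\le4\tau^{-k}$ and (ii) $|B_X(u,\tau^{-k}/3)|\ge\max\{|B_X(w,\tau^{-k}/3)|:w\in B_X(u',6\tau^{-(k+1)})\}$. For $S\subseteq X$ nonempty, $\mathsf f_k(S)$ denotes a (fixed) maximizer of $|B_X(y,\tau^{-k}/3)|$ over $y\in B_X(S,2\tau^{-k})\cap U_k$. *)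

theory Defs
  imports "HOL-Analysis.Analysis"
begin

definition nbhd :: "'a set \<Rightarrow> ('a \<Rightarrow> 'a \<Rightarrow> real) \<Rightarrow> 'a set \<Rightarrow> real \<Rightarrow> 'a set" where
  "nbhd X d S r = {x \<in> X. \<exists>s\<in>S. d x s \<le> r}"

definition pball :: "'a set \<Rightarrow> ('a \<Rightarrow> 'a \<Rightarrow> real) \<Rightarrow> 'a \<Rightarrow> real \<Rightarrow> 'a set" where
  "pball X d x r = nbhd X d {x} r"

definition sdiam :: "('a \<Rightarrow> 'a \<Rightarrow> real) \<Rightarrow> 'a set \<Rightarrow> real" where
  "sdiam d S = (SUP p\<in>S \<times> S. d (fst p) (snd p))"

definition eps0 :: "'a set \<Rightarrow> ('a \<Rightarrow> 'a \<Rightarrow> real) \<Rightarrow> real" where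
  "eps0 X d = Min {d x y | x y. x \<in> X \<and> y \<in> X \<and> x \<noteq> y}"

definition tau :: real where "tau = 12"

definition Klev :: "'a set \<Rightarrow> ('a \<Rightarrow> 'a \<Rightarrow> real) \<Rightarrow> nat" where
  "Klev X d = 1 + nat \<lceil>log tau (1 / eps0 X d)\<rceil>"

text \<open>A run of the greedy \<eta>-net procedure: the list xs = [x_1,...,x_m] of picked points,
  where x_{i+1} lies in S_{i+1} = X - B(N_i, \<eta>) and maximizes |B(x,\<eta>/3)| over S_{i+1},
  and the procedure stops because S_{m+1} is empty. Any tie-breaking is allowed.\<close>
definition greedy_run :: "'a set \<Rightarrow> ('a \<Rightarrow> 'a \<Rightarrow> real) \<Rightarrow> real \<Rightarrow> 'a list \<Rightarrow> bool" where
  "greedy_run X d \<eta> xs \<longleftrightarrow>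
     (\<forall>i < length xs.
        xs ! i \<in> X - nbhd X d (set (take i xs)) \<eta> \<and>
        (\<forall>y \<in> X - nbhd X d (set (take i xs)) \<eta>.
            card (pball X d y (\<eta>/3)) \<le> card (pball X d (xs ! i) (\<eta>/3)))) \<and>
     X - nbhd X d (set xs) \<eta> = {}"

definition greedy_net :: "'a set \<Rightarrow> ('a \<Rightarrow> 'a \<Rightarrow> real) \<Rightarrow> real \<Rightarrow> 'a set \<Rightarrow> bool" where
  "greedy_net X d \<eta> N \<longleftrightarrow> (\<exists>xs. greedy_run X d \<eta> xs \<and> N = set xs)"

definition Aedge :: "'a set \<Rightarrow> ('a \<Rightarrow> 'a \<Rightarrow> real) \<Rightarrow> (nat \<Rightarrow> 'a set) \<Rightarrow> nat \<Rightarrow> ('a \<times> 'a) set" where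
  "Aedge X d U k = {(u, u'). u \<in> U k \<and> u' \<in> U (Suc k) \<and>
      d u u' \<le> 4 * tau powi (- int k) \<and>
      card (pball X d u (tau powi (- int k) / 3)) \<ge>
        Max ((\<lambda>w. card (pball X d w (tau powi (- int k) / 3)))
               ` pball X d u' (6 * tau powi (- int (Suc k))))}"

text \<open>y is an admissible value of f_k(S): a maximizer of |B(y,\<tau>^-k/3)| over B(S,2\<tau>^-k) \<inter> U_k.\<close>
definition is_fk :: "'a set \<Rightarrow> ('a \<Rightarrow> 'a \<Rightarrow> real) \<Rightarrow> (nat \<Rightarrow> 'a set) \<Rightarrow> nat \<Rightarrow> 'a set \<Rightarrow> 'a \<Rightarrow> bool" where
  "is_fk X d U k S y \<longleftrightarrow>
     y \<in> nbhd X d S (2 * tau powi (- int k)) \<inter> U k \<and>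
     (\<forall>z \<in> nbhd X d S (2 * tau powi (- int k)) \<inter> U k.
        card (pball X d z (tau powi (- int k) / 3)) \<le> card (pball X d y (tau powi (- int k) / 3)))"

end

theory Submission
  imports Defs
begin

lemma greedy_cover:
  assumes "greedy_run X d \<eta> xs" "w \<in> X"
  shows "\<exists>i<length xs. d w (xs ! i) \<le> \<eta> \<and>
           card (pball X d w (\<eta>/3)) \<le> card (pball X d (xs ! i) (\<eta>/3))"
proof -
  define P where "P n = (w \<in> nbhd X d (set (take n xs)) \<eta>)" for n
  have Pl: "P (length xs)" using assms unfolding greedy_run_def P_def by auto
  have P0: "\<not> P 0" unfolding P_def nbhd_def by simp
  define n where "n = (LEAST n. P n)"
  have Pn: "P n" unfolding n_def using Pl by (rule LeastI)
  have nle: "n \<le> length xs" unfolding n_def using Pl by (rule Least_le)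
  have n0: "n \<noteq> 0" using Pn P0 by (metis)
  then obtain i where ni: "n = Suc i" by (cases n) auto
  have nPi: "\<not> P i" using not_less_Least[of i P] ni n_def by auto
  have il: "i < length xs" using nle ni by simp
  have tk: "take (Suc i) xs = take i xs @ [xs ! i]" using il by (simp add: take_Suc_conv_app_nth)
  have "d w (xs ! i) \<le> \<eta>" using Pn nPi unfolding P_def nbhd_def ni tk by auto
  moreover have "w \<in> X - nbhd X d (set (take i xs)) \<eta>" using nPi assms(2) unfolding P_def by auto
  hence "card (pball X d w (\<eta>/3)) \<le> card (pball X d (xs ! i) (\<eta>/3))"
    using assms(1) il unfolding greedy_run_def by blast
  ultimately show ?thesis using il by blast
qed

theorem lemma3p3:
  fixes X :: "'a set" and d :: "'a \<Rightarrow> 'a \<Rightarrow> real" and U :: "nat \<Rightarrow> 'a set"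
    and k :: nat and S :: "'a set" and u' y :: 'a
  assumes "Metric_space X d"
    and "finite X" and "card X \<ge> 2"
    and "sdiam d X = 1"
    and "\<And>j. j \<le> Klev X d \<Longrightarrow> greedy_net X d (tau powi (- int j)) (U j)"
    and "k < Klev X d"
    and "S \<subseteq> X" and "S \<noteq> {}"
    and "sdiam d S \<le> 2 * tau powi (- int k)"
    and "u' \<in> S \<inter> U (Suc k)"
    and "is_fk X d U k S y"
  shows "(y, u') \<in> Aedge X d U k"
proof -
  interpret M: Metric_space X d by fact
  define r where "r = tau powi (- int k)"
  have r6: "6 * tau powi (- int (Suc k)) = r / 2"
    unfolding r_def tau_def by (simp add: power_int_diff power_int_minus field_simps)
  have rpos: "r > 0" unfolding r_def tau_def by simp
  have finS: "finite S" using assms(2,7) finite_subset by blast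
  have diam: "d a b \<le> 2 * r" if "a \<in> S" "b \<in> S" for a b
  proof -
    have "d a b \<le> sdiam d S" unfolding sdiam_def
      using that finS by (intro cSUP_upper2[where x="(a,b)"]) (auto intro: bdd_above_finite)
    thus ?thesis using assms(9) r_def by simp
  qed
  have u'S: "u' \<in> S" and u'U: "u' \<in> U (Suc k)" using assms(10) by auto
  have u'X: "u' \<in> X" using u'S assms(7) by auto
  have yfk: "y \<in> nbhd X d S (2 * r) \<inter> U k"
     and ymax: "\<And>z. z \<in> nbhd X d S (2 * r) \<inter> U k \<Longrightarrow>
        card (pball X d z (r / 3)) \<le> card (pball X d y (r / 3))"
    using assms(11) unfolding is_fk_def r_def by auto
  obtain s where s: "s \<in> S" "d y s \<le> 2 * r" "y \<in> X" using yfk unfolding nbhd_def by auto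
  have sX: "s \<in> X" using s assms(7) by auto
  have dist: "d y u' \<le> 4 * r"
    using M.triangle[OF s(3) sX u'X] diam[OF s(1) u'S] s(2) by linarith
  obtain xs where xs: "greedy_run X d r xs" "U k = set xs"
    using assms(5)[of k] assms(6) unfolding greedy_net_def r_def by auto
  have bound: "card (pball X d w (r / 3)) \<le> card (pball X d y (r / 3))"
    if w: "w \<in> pball X d u' (r / 2)" for w
  proof -
    have wX: "w \<in> X" and dw: "d w u' \<le> r/2" using w unfolding pball_def nbhd_def by auto
    obtain i where i: "i < length xs" "d w (xs ! i) \<le> r"
      "card (pball X d w (r/3)) \<le> card (pball X d (xs ! i) (r/3))"
      using greedy_cover[OF xs(1) wX] by auto
    have zX: "xs ! i \<in> X" using xs(1) i(1) unfolding greedy_run_def by auto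
    have "d (xs ! i) u' \<le> d (xs ! i) w + d w u'" using M.triangle[OF zX wX u'X] .
    also have "\<dots> \<le> 2 * r" using i(2) dw M.commute[of w "xs ! i"] rpos by linarith
    finally have "xs ! i \<in> nbhd X d S (2 * r) \<inter> U k"
      using zX u'S xs(2) i(1) unfolding nbhd_def by auto
    from ymax[OF this] i(3) show ?thesis by linarith
  qed
  have fin: "finite (pball X d u' (r/2))" using assms(2) unfolding pball_def nbhd_def by auto
  have ne: "pball X d u' (r/2) \<noteq> {}" using u'X rpos unfolding pball_def nbhd_def by force
  have "Max ((\<lambda>w. card (pball X d w (r / 3))) ` pball X d u' (r/2)) \<le> card (pball X d y (r / 3))"
    using fin ne bound by (subst Max_le_iff) auto
  hence "Max ((\<lambda>w. card (pball X d w (tau powi (- int k) / 3))) ` pball X d u' (6 * tau powi (- int (Suc k)))) \<le> card (pball X d y (tau powi (- int k) / 3))"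
    unfolding r6 unfolding r_def .
  thus ?thesis unfolding Aedge_def using yfk u'U dist unfolding r_def by auto
qed

end
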